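(* Let $p,q\geq 2$ be relatively prime integers, let $c,c'\in A_{pq}^{\mathbb{Z}}$ and $k>0$. If $\mathrm{tr}_{p,q}(c,k)(i)=\mathrm{tr}_{p,q}(c',k)(i)$ for all $-(k-1)\leq i\leq k-1$, then $c(j)=c'(j)$ for all $1\leq j\leq k$.
   Context: For an integer $n>1$, $A_n=\{0,1,\dots,n-1\}$. For relatively prime integers $p,q\geq2$ define $g_{p,q}:A_{pq}\times A_{pq}\to A_{pq}$ by writing $x=x_1q+x_0$, $y=y_1q+y_0$ with $x_0,y_0\in A_q$, $x_1,y_1\in A_p$ (uniquely), and setting $g_{p,q}(x,y)=x_0p+y_1$. Define $F_{p,q}:A_{pq}^{\mathbb{Z}}\to A_{pq}^{\mathbb{Z}}$ by $F_{p,q}(c)(i)=g_{p,q}\big(g_{p,q}(c(i-1),c(i)),\,g_{p,q}(c(i),c(i+1))\big)$. The map $F_{p,q}$ is a bijection with inverse $F_{q,p}$ (same formulas with $p,q$ exchanged), so $F_{p,q}^n$ is defined for all $n\in\mathbb{Z}$. The $k$-trace of $c$ is the sequence $\mathrm{tr}_{p,q}(c,k)=(F_{p,q}^n(c)(k))_{n\in\mathbb{Z}}$. *)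

theory Defs
  imports Main
begin

text \<open>Configurations in A_{pq}^Z are modelled as functions int => nat whose values
are all < p*q.  For x = x1*q + x0 with x0 < q, x0 = x mod q and x1 = x div q.\<close>

definition g :: "nat \<Rightarrow> nat \<Rightarrow> nat \<Rightarrow> nat \<Rightarrow> nat" where
  "g p q x y = (x mod q) * p + y div q"

definition F :: "nat \<Rightarrow> nat \<Rightarrow> (int \<Rightarrow> nat) \<Rightarrow> (int \<Rightarrow> nat)" where
  "F p q c = (\<lambda>i. g p q (g p q (c (i - 1)) (c i)) (g p q (c i) (c (i + 1))))"

text \<open>Integer powers: negative powers use the inverse F q p.\<close>
definition Fpow :: "nat \<Rightarrow> nat \<Rightarrow> int \<Rightarrow> (int \<Rightarrow> nat) \<Rightarrow> (int \<Rightarrow> nat)" where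
  "Fpow p q n c = (if 0 \<le> n then (F p q ^^ nat n) c else (F q p ^^ nat (- n)) c)"

definition config :: "nat \<Rightarrow> (int \<Rightarrow> nat) \<Rightarrow> bool" where
  "config m c \<longleftrightarrow> (\<forall>i. c i < m)"

definition tr :: "nat \<Rightarrow> nat \<Rightarrow> (int \<Rightarrow> nat) \<Rightarrow> int \<Rightarrow> (int \<Rightarrow> nat)" where
  "tr p q c k = (\<lambda>n. Fpow p q n c k)"

end

theory Submission
  imports Defs "HOL-Number_Theory.Cong"
begin

lemma g_bound:
  assumes "0 < p" "0 < q" "y < p * q"
  shows "g p q x y < p * q"
proof -
  have "y div q < p" using assms by (simp add: div_less_iff_less_mult mult.commute)
  moreover have "x mod q < q" using assms by simp
  ultimately have "(x mod q) * p + y div q < (x mod q) * p + p" by simp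
  also have "\<dots> = (x mod q + 1) * p" by simp
  also have "\<dots> \<le> q * p" using \<open>x mod q < q\<close> by (intro mult_right_mono) auto
  finally show ?thesis unfolding g_def by (simp add: mult.commute)
qed

lemma g_mod_p:
  assumes "0 < p" "0 < q" "y < p * q"
  shows "g p q x y mod p = y div q" and "g p q x y div p = x mod q"
proof -
  have "y div q < p" using assms by (simp add: div_less_iff_less_mult mult.commute)
  then show "g p q x y mod p = y div q" "g p q x y div p = x mod q"
    unfolding g_def using assms by auto
qed

lemma config_F:
  assumes "0 < p" "0 < q" "config (p * q) c"
  shows "config (p * q) (F p q c)"
  using assms unfolding config_def F_def by (auto intro!: g_bound)

lemma g_inv:
  assumes "0 < p" "0 < q" "y < p * q" "z < p * q"
  shows "g q p (g p q x y) (g p q y z) = y"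
proof -
  have "g p q x y mod p = y div q" using g_mod_p assms by blast
  moreover have "g p q y z div p = y mod q" using g_mod_p assms by blast
  ultimately show ?thesis unfolding g_def[of q p] by simp
qed

lemma F_inv:
  assumes "0 < p" "0 < q" "config (p * q) c"
  shows "F q p (F p q c) = c"
proof
  fix i
  define G where "G = (\<lambda>j. g p q (c j) (c (j + 1)))"
  have cG: "G j < p * q" for j using assms unfolding G_def config_def by (auto intro!: g_bound)
  have e: "F p q c j = g p q (G (j - 1)) (G j)" for j unfolding F_def G_def by simp
  have 1: "g q p (F p q c (i - 1)) (F p q c i) = G (i - 1)"
    unfolding e using g_inv[OF assms(1,2) cG cG] by (simp add: algebra_simps)
  have 2: "g q p (F p q c i) (F p q c (i + 1)) = G i"
    unfolding e using g_inv[OF assms(1,2) cG cG] by simp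
  have 3: "g q p (G (i - 1)) (G i) = c i"
    unfolding G_def using g_inv[OF assms(1,2)] assms(3) unfolding config_def by simp
  show "F q p (F p q c) i = c i"
    unfolding F_def[of q p] using 1 2 3 by simp
qed

lemma Fpow_facts:
  assumes "0 < p" "0 < q" "config (p * q) c"
  shows "config (p * q) (Fpow p q n c) \<and> F p q (Fpow p q n c) = Fpow p q (n + 1) c
     \<and> F q p (Fpow p q n c) = Fpow p q (n - 1) c"
proof -
  have cq: "config (q * p) c" using assms(3) by (simp add: mult.commute)
  have cfp: "config (p * q) ((F p q ^^ m) c)" for m
    by (induction m) (auto intro: config_F assms)
  have cfq: "config (q * p) ((F q p ^^ m) c)" for m
    by (induction m) (auto intro: config_F assms cq)
  show ?thesis
  proof (cases "0 \<le> n")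
    case True
    have a: "config (p * q) (Fpow p q n c)" using True cfp unfolding Fpow_def by simp
    have b: "F p q (Fpow p q n c) = Fpow p q (n + 1) c"
      using True unfolding Fpow_def by (simp add: nat_add_distrib)
    have c: "F q p (Fpow p q n c) = Fpow p q (n - 1) c"
    proof (cases "n = 0")
      case True then show ?thesis unfolding Fpow_def by simp
    next
      case False
      then obtain m where m: "nat n = Suc m" using \<open>0 \<le> n\<close> by (cases "nat n") auto
      then have "nat (n - 1) = m" by simp
      moreover have "0 \<le> n - 1" using False True by simp
      ultimately show ?thesis using m F_inv[OF assms(1,2) cfp[of m]] True
        unfolding Fpow_def by simp
    qed
    show ?thesis using a b c by blast
  next
    case False
    then obtain m where m: "nat (- n) = Suc m" by (cases "nat (-n)") auto
    have a: "config (p * q) (Fpow p q n c)" using False cfq unfolding Fpow_def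
      by (simp add: mult.commute)
    have b: "F p q (Fpow p q n c) = Fpow p q (n + 1) c"
    proof (cases "n = -1")
      case True
      then show ?thesis unfolding Fpow_def using F_inv[OF assms(2,1) cq] by simp
    next
      case False2: False
      have "nat (-(n+1)) = m" using m by simp
      moreover have "\<not> 0 \<le> n + 1" using False False2 by simp
      ultimately show ?thesis using m F_inv[OF assms(2,1) cfq[of m]] \<open>\<not> 0 \<le> n\<close>
        unfolding Fpow_def by simp
    qed
    have c: "F q p (Fpow p q n c) = Fpow p q (n - 1) c"
    proof -
      have "nat (1 - n) = Suc (nat (- n))" using False by simp
      then show ?thesis using False unfolding Fpow_def by simp
    qed
    show ?thesis using a b c by blast
  qed
qed

lemma local_mod:
  assumes "0 < p" "0 < q" "coprime p q" "config (p * q) d" "config (p * q) d'"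
    "d k = d' k" "F p q d k = F p q d' k"
  shows "d (k - 1) mod q = d' (k - 1) mod q"
proof -
  have bd: "g p q (d k) (d (k + 1)) < p * q" "g p q (d' k) (d' (k + 1)) < p * q"
    using assms unfolding config_def by (auto intro!: g_bound)
  have "F p q d k div p = g p q (d (k - 1)) (d k) mod q"
    unfolding F_def using g_mod_p(2)[OF assms(1,2) bd(1)] by simp
  moreover have "F p q d' k div p = g p q (d' (k - 1)) (d' k) mod q"
    unfolding F_def using g_mod_p(2)[OF assms(1,2) bd(2)] by simp
  ultimately have "[(d (k - 1) mod q) * p + d k div q = (d' (k - 1) mod q) * p + d k div q] (mod q)"
    using assms(6,7) unfolding g_def cong_def by simp
  then have "[(d (k - 1) mod q) * p = (d' (k - 1) mod q) * p] (mod q)"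
    by (simp add: cong_add_rcancel_nat)
  then have "[d (k - 1) mod q = d' (k - 1) mod q] (mod q)"
    using cong_mult_rcancel_nat assms(3) by blast
  then show ?thesis unfolding cong_def by simp
qed

lemma local_lemma:
  assumes "0 < p" "0 < q" "coprime p q" "config (p * q) d" "config (p * q) d'"
    "d k = d' k" "F p q d k = F p q d' k" "F q p d k = F q p d' k"
  shows "d (k - 1) = d' (k - 1)"
proof -
  have 1: "d (k - 1) mod q = d' (k - 1) mod q" using local_mod assms by blast
  have 2: "d (k - 1) mod p = d' (k - 1) mod p"
    using local_mod[OF assms(2,1) _ _ _ assms(6,8)] assms(3,4,5)
    by (simp add: mult.commute coprime_commute)
  have "[d (k - 1) = d' (k - 1)] (mod p * q)"
    using coprime_cong_mult_nat 1 2 assms(3) unfolding cong_def by blast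
  then show ?thesis using cong_less_modulus_unique_nat assms(4,5) unfolding config_def by blast
qed

lemma main:
  assumes "0 < p" "0 < q" "coprime p q"
  shows "\<forall>c c'. config (p * q) c \<longrightarrow> config (p * q) c' \<longrightarrow>
    (\<forall>i. - (int m - 1) \<le> i \<and> i \<le> int m - 1 \<longrightarrow> Fpow p q i c (int m) = Fpow p q i c' (int m))
    \<longrightarrow> (\<forall>j. 1 \<le> j \<and> j \<le> int m \<longrightarrow> c j = c' j)"
proof (induction m)
  case 0
  then show ?case by auto
next
  case (Suc m)
  show ?case
  proof (intro allI impI)
    fix c c' j
    assume cc: "config (p * q) c" "config (p * q) c'"
      and tr: "\<forall>i. - (int (Suc m) - 1) \<le> i \<and> i \<le> int (Suc m) - 1 \<longrightarrow>
                 Fpow p q i c (int (Suc m)) = Fpow p q i c' (int (Suc m))"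
      and j: "1 \<le> j \<and> j \<le> int (Suc m)"
    have tr': "Fpow p q i c (int m + 1) = Fpow p q i c' (int m + 1)" if "- int m \<le> i" "i \<le> int m" for i
      using tr that by (simp add: add.commute)
    have step: "Fpow p q i c (int m) = Fpow p q i c' (int m)"
      if "- (int m - 1) \<le> i" "i \<le> int m - 1" for i
    proof -
      have f: "config (p * q) (Fpow p q i c)" "config (p * q) (Fpow p q i c')"
        "F p q (Fpow p q i c) = Fpow p q (i + 1) c" "F p q (Fpow p q i c') = Fpow p q (i + 1) c'"
        "F q p (Fpow p q i c) = Fpow p q (i - 1) c" "F q p (Fpow p q i c') = Fpow p q (i - 1) c'"
        using Fpow_facts[OF assms(1,2) cc(1), of i] Fpow_facts[OF assms(1,2) cc(2), of i] by auto
      have "Fpow p q i c (int m + 1 - 1) = Fpow p q i c' (int m + 1 - 1)"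
        apply (rule local_lemma[OF assms f(1,2)])
        using tr'[of i] tr'[of "i+1"] tr'[of "i - 1"] that f(3-6) by auto
      then show ?thesis by simp
    qed
    show "c j = c' j"
    proof (cases "j = int (Suc m)")
      case True
      have "Fpow p q 0 c (int (Suc m)) = Fpow p q 0 c' (int (Suc m))" using tr by simp
      then show ?thesis using True unfolding Fpow_def by simp
    next
      case False
      then show ?thesis using Suc.IH cc step j by auto
    qed
  qed
qed

theorem corollary1:
  fixes p q :: nat and c c' :: "int \<Rightarrow> nat" and k :: int
  assumes "p \<ge> 2" and "q \<ge> 2" and "coprime p q"
    and "config (p * q) c" and "config (p * q) c'"
    and "k > 0"
    and "\<forall>i. - (k - 1) \<le> i \<and> i \<le> k - 1 \<longrightarrow> tr p q c k i = tr p q c' k i"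
  shows "\<forall>j. 1 \<le> j \<and> j \<le> k \<longrightarrow> c j = c' j"
proof -
  have k: "k = int (nat k)" using assms(6) by simp
  have "0 < p" "0 < q" using assms(1,2) by auto
  from main[OF this assms(3), of "nat k"] assms(4,5,7) k show ?thesis
    unfolding tr_def by metis
qed

end
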